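(* Let $\lambda\in\mathbf{C}$ with $\lambda\neq1$, let $r,n\in\mathbf{Z}_{+}$ (nonnegative integers), and let $p(x)\in\mathbb{P}_{n}(\lambda)$ be written as $p(x)=\sum_{k=0}^{n}C_{k}H_{k}^{(r)}(x\vert\lambda)$ with $C_{k}\in\mathbf{Q}(\lambda)$. Then for each $k=0,\dots,n$, \[ C_{k}=\frac{1}{(1-\lambda)^{r}k!}\sum_{j=0}^{r}\binom{r}{j}(-\lambda)^{r-j}D^{k}p(j), \] that is, \[ p(x)=\frac{1}{(1-\lambda)^{r}}\sum_{k=0}^{n}\Bigl(\sum_{j=0}^{r}\frac{1}{k!}\binom{r}{j}(-\lambda)^{r-j}D^{k}p(j)\Bigr)H_{k}^{(r)}(x\vert\lambda). \]
   Context: For $\lambda\in\mathbf{C}$, $\lambda\neq1$, and $r\in\mathbf{Z}_{+}$, the Frobenius–Euler polynomials of order $r$ are defined by $\left(\frac{1-\lambda}{e^{t}-\lambda}\right)^{r}e^{xt}=\sum_{n=0}^{\infty}H_{n}^{(r)}(x\vert\lambda)\frac{t^{n}}{n!}$; each $H_n^{(r)}(x\vert\lambda)$ is monic of degree $n$ with coefficients in $\mathbf{Q}(\lambda)$. $\mathbb{P}_{n}(\lambda)$ is the $\mathbf{Q}(\lambda)$-vector space of polynomials in $x$ with coefficients in $\mathbf{Q}(\lambda)$ of degree at most $n$, and $\{H_0^{(r)}(x\vert\lambda),\dots,H_n^{(r)}(x\vert\lambda)\}$ is a basis of it. $D$ denotes differentiation $d/dx$, and $D^kp(j)$ is the $k$-th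 derivative of $p$ evaluated at $x=j$. *)

theory Defs
  imports Complex_Main "HOL-Computational_Algebra.Computational_Algebra"
begin

text \<open>The field Q(lam) inside the complex numbers: values at lam of rational functions
  with rational coefficients.\<close>
definition Q_adj :: "complex \<Rightarrow> complex set" where
  "Q_adj lam = {poly (map_poly of_rat f) lam / poly (map_poly of_rat g) lam | f g.
                 poly (map_poly of_rat g) lam \<noteq> 0}"

definition FE_factor :: "complex \<Rightarrow> nat \<Rightarrow> complex fps" where
  "FE_factor lam r = (fps_const (1 - lam) / (fps_exp 1 - fps_const lam)) ^ r"

text \<open>Frobenius--Euler polynomial H_n^{(r)}(x|lam): n! times the coefficient of t^n in
  ((1 - lam)/(e^t - lam))^r e^{xt}, computed in the power series ring over complex[x].\<close>
definition frobenius_euler :: "nat \<Rightarrow> nat \<Rightarrow> complex \<Rightarrow> complex poly" where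
  "frobenius_euler r n lam =
     smult (fact n)
       (fps_nth (Abs_fps (\<lambda>m. [: fps_nth (FE_factor lam r) m :])
                 * Abs_fps (\<lambda>m. smult (1 / fact m) (monom 1 m))) n)"

end

theory Submission imports Defs begin

definition GG :: "(nat \<Rightarrow> complex) \<Rightarrow> nat \<Rightarrow> complex poly" where
  "GG a n = (\<Sum>d=0..n. smult (a (n-d) / fact d) (monom 1 d))"

lemma pderiv_sum': "pderiv (sum f A) = (\<Sum>x\<in>A. pderiv (f x))"
  using higher_pderiv_sum[of 1 f A] by simp

lemma pderiv_GG: "pderiv (GG a (Suc n)) = GG a n"
proof -
  have "pderiv (GG a (Suc n)) = (\<Sum>d=0..Suc n. smult (a (Suc n-d) / fact d) (monom (of_nat d) (d-1)))"
    unfolding GG_def pderiv_sum' by (simp add: pderiv_smult pderiv_monom)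
  also have "\<dots> = (\<Sum>d=0..n. smult (a (Suc n - Suc d) / fact (Suc d)) (monom (of_nat (Suc d)) d))"
    by (subst sum.atLeast0_atMost_Suc_shift) simp
  also have "\<dots> = GG a n" unfolding GG_def
  proof (rule sum.cong[OF refl])
    fix d assume "d \<in> {0..n}"
    have "monom (of_nat (Suc d)) d = smult (of_nat (Suc d)) (monom (1::complex) d)"
      by (simp add: smult_monom)
    moreover have "a (Suc n - Suc d) / fact (Suc d) * of_nat (Suc d) = a (n - d) / (fact d :: complex)"
      by (simp add: fact_Suc del: of_nat_Suc)
    ultimately show "smult (a (Suc n - Suc d) / fact (Suc d)) (monom (of_nat (Suc d)) d) = smult (a (n - d) / fact d) (monom 1 d)"
      by (simp del: of_nat_Suc)
  qed
  finally show ?thesis .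
qed

lemma GG0: "GG a 0 = [:a 0:]" unfolding GG_def by (simp add: monom_0)

lemma hpderiv_GG: "(pderiv ^^ k) (GG a m) = (if k \<le> m then GG a (m - k) else 0)"
proof (induction k)
  case 0 then show ?case by simp
next
  case (Suc k)
  have "(pderiv ^^ Suc k) (GG a m) = pderiv ((pderiv ^^ k) (GG a m))" by simp
  also have "\<dots> = (if Suc k \<le> m then GG a (m - Suc k) else 0)"
  proof (cases "Suc k \<le> m")
    case True
    then have "m - k = Suc (m - Suc k)" by simp
    then show ?thesis using True Suc.IH pderiv_GG by simp
  next
    case False
    then show ?thesis using Suc.IH by (auto simp: GG0 pderiv_pCons)
  qed
  finally show ?case .
qed

lemma FE_GG: "frobenius_euler r n lam = smult (fact n) (GG (\<lambda>m. fps_nth (FE_factor lam r) m) n)"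
proof -
  have "fps_nth (Abs_fps (\<lambda>m. [: fps_nth (FE_factor lam r) m :])
                 * Abs_fps (\<lambda>m. smult (1 / fact m) (monom 1 m))) n
     = (\<Sum>i=0..n. [: fps_nth (FE_factor lam r) i :] * smult (1 / fact (n-i)) (monom 1 (n-i)))"
    by (simp add: fps_mult_nth)
  also have "\<dots> = (\<Sum>i=0..n. smult (fps_nth (FE_factor lam r) i / fact (n-i)) (monom 1 (n-i)))"
    by (simp add: field_simps)
  also have "\<dots> = GG (\<lambda>m. fps_nth (FE_factor lam r) m) n"
    unfolding GG_def by (subst sum.atLeastAtMost_rev) (simp add: )
  finally show ?thesis unfolding frobenius_euler_def by simp
qed

lemma B_eq: "(\<Sum>j=0..r. fps_const (of_nat (r choose j) * (- lam) ^ (r - j)) * fps_exp (of_nat j))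
   = (fps_exp 1 - fps_const (lam::complex)) ^ r"
proof -
  have "(fps_exp 1 - fps_const (lam::complex)) ^ r = (fps_exp 1 + fps_const (- lam)) ^ r" by (simp only: diff_conv_add_uminus fps_const_neg)
  also have "\<dots> = (\<Sum>j\<le>r. of_nat (r choose j) * fps_exp 1 ^ j * fps_const (- lam) ^ (r - j))"
    by (rule binomial_ring)
  also have "\<dots> = (\<Sum>j=0..r. fps_const (of_nat (r choose j) * (- lam) ^ (r - j)) * fps_exp (of_nat j))"
    by (rule sum.cong) (simp_all only: atLeast0AtMost fps_const_mult[symmetric] fps_of_nat fps_exp_power_mult fps_const_power mult_1_left mult_1_right mult_ac)
  finally show ?thesis by simp
qed

lemma B_FE: assumes "lam \<noteq> 1"
  shows "(fps_exp 1 - fps_const (lam::complex)) ^ r * FE_factor lam r = fps_const ((1 - lam) ^ r)"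
proof -
  let ?Y = "fps_exp 1 - fps_const (lam::complex)"
  have Y0: "?Y $ 0 \<noteq> 0" using assms by simp
  have "?Y * (fps_const (1 - lam) / ?Y) = fps_const (1 - lam)"
    using Y0 by (simp add: fps_divide_unit inverse_mult_eq_1' mult.left_commute[of ?Y])
  then have "(?Y * (fps_const (1 - lam) / ?Y)) ^ r = fps_const ((1 - lam) ^ r)" by simp
  then show ?thesis unfolding FE_factor_def by (simp add: power_mult_distrib)
qed

lemma L_GG: assumes "lam \<noteq> 1"
  shows "(\<Sum>j=0..r. of_nat (r choose j) * (- lam) ^ (r - j) * poly (GG (\<lambda>m. fps_nth (FE_factor lam r) m) m) (of_nat j))
    = (if m = 0 then (1 - lam) ^ r else 0)"
proof -
  define a where "a = (\<lambda>m. fps_nth (FE_factor lam r) m)"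
  define c where "c = (\<lambda>j. of_nat (r choose j) * (- lam) ^ (r - j) :: complex)"
  define B where "B = (\<Sum>j=0..r. fps_const (c j) * fps_exp (of_nat j))"
  have "(\<Sum>j=0..r. c j * poly (GG a m) (of_nat j))
      = (\<Sum>j=0..r. \<Sum>d=0..m. c j * (a (m-d) / fact d * of_nat j ^ d))"
    unfolding GG_def by (simp add: poly_sum poly_monom sum_distrib_left)
  also have "\<dots> = (\<Sum>d=0..m. \<Sum>j=0..r. c j * (a (m-d) / fact d * of_nat j ^ d))"
    by (rule sum.swap)
  also have "\<dots> = (\<Sum>d=0..m. B $ d * a (m - d))"
    unfolding B_def fps_sum_nth sum_distrib_right by (intro sum.cong refl) simp
  also have "\<dots> = (B * FE_factor lam r) $ m"
    by (simp add: fps_mult_nth a_def)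
  also have "\<dots> = (if m = 0 then (1 - lam) ^ r else 0)"
    unfolding B_def c_def B_eq B_FE[OF assms] by simp
  finally show ?thesis unfolding a_def c_def by (simp add: mult.assoc)
qed

theorem theorem5:
  fixes lam :: complex and r n :: nat and p :: "complex poly" and C :: "nat \<Rightarrow> complex"
  assumes "lam \<noteq> 1"
    and "\<forall>i. coeff p i \<in> Q_adj lam"
    and "\<forall>k\<le>n. C k \<in> Q_adj lam"
    and "p = (\<Sum>k=0..n. smult (C k) (frobenius_euler r k lam))"
  shows "\<forall>k\<le>n. C k = 1 / ((1 - lam) ^ r * fact k) *
           (\<Sum>j=0..r. of_nat (r choose j) * (- lam) ^ (r - j) * poly ((pderiv ^^ k) p) (of_nat j))"
proof (intro allI impI)
  fix k assume kn: "k \<le> n"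
  define a where "a = (\<lambda>m. fps_nth (FE_factor lam r) m)"
  define L where "L = (\<lambda>q. \<Sum>j=0..r. of_nat (r choose j) * (- lam) ^ (r - j) * poly q (of_nat j :: complex))"
  have Lsum: "L (sum f A) = (\<Sum>x\<in>A. L (f x))" for f :: "nat \<Rightarrow> complex poly" and A
    unfolding L_def poly_sum sum_distrib_left by (rule sum.swap)
  have Lsmult: "L (smult c q) = c * L q" for c q
    unfolding L_def sum_distrib_left by (simp add: mult_ac)
  have L0: "L 0 = 0" unfolding L_def by simp
  have LG: "L (GG a m) = (if m = 0 then (1 - lam) ^ r else 0)" for m
    unfolding L_def a_def by (rule L_GG[OF assms(1)])
  have p_eq: "p = (\<Sum>m=0..n. smult (C m * fact m) (GG a m))"
    unfolding assms(4) FE_GG a_def by simp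
  have "L ((pderiv ^^ k) p) = (\<Sum>m=0..n. C m * fact m * L (if k \<le> m then GG a (m - k) else 0))"
    unfolding p_eq higher_pderiv_sum higher_pderiv_smult hpderiv_GG Lsum Lsmult ..
  also have "\<dots> = (\<Sum>m=0..n. if m = k then C k * fact k * (1 - lam) ^ r else 0)"
    by (intro sum.cong refl) (auto simp: LG L0)
  also have "\<dots> = C k * fact k * (1 - lam) ^ r"
    using kn by simp
  finally have "L ((pderiv ^^ k) p) = C k * fact k * (1 - lam) ^ r" .
  then have "(\<Sum>j=0..r. of_nat (r choose j) * (- lam) ^ (r - j) * poly ((pderiv ^^ k) p) (of_nat j)) = C k * fact k * (1 - lam) ^ r"
    unfolding L_def .
  moreover have "(1 - lam) ^ r \<noteq> 0" using assms(1) by simp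
  ultimately show "C k = 1 / ((1 - lam) ^ r * fact k) *
           (\<Sum>j=0..r. of_nat (r choose j) * (- lam) ^ (r - j) * poly ((pderiv ^^ k) p) (of_nat j))"
    using assms(1) by (simp add: field_simps)
qed

end
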